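(* Let $\delta,\alpha\geq0$, $\theta\in[0,\alpha]$, $\sigma\in\mathbb{R}$, $\varepsilon\in(0,1)$, and let $E_1(t,\xi)=\frac12|\xi|^{2\delta+\sigma}|\widehat{v}_t(t,\xi)|^2+\frac12|\xi|^{2\alpha+\sigma}|\widehat{v}(t,\xi)|^2$. (i) If $(v_0,v_1)\in H^{\alpha+\frac\sigma2}(\mathbb{R}^n)\times H^{\delta+\frac\sigma2}(\mathbb{R}^n)$ and $\delta\leq\theta\leq\alpha$, then there is a constant $c>0$ such that $$\int_{|\xi|\geq\varepsilon}E_1(t,\xi)\,d\xi\lesssim\left\{\|v_1\|^2_{H^{\delta+\frac\sigma2}}+\|v_0\|^2_{H^{\alpha+\frac\sigma2}}\right\}e^{-ct},\quad\forall t\geq0.$$ (ii) If $(v_0,v_1)\in H^s(\mathbb{R}^n)\times H^r(\mathbb{R}^n)$, $\beta>0$ and $\theta<\delta$, with $s=\alpha+\frac{\delta-\theta}{\beta}+\frac\sigma2$ and $r=\delta+\frac{\delta-\theta}{\beta}+\frac\sigma2$, then there is $C=C(\beta)>0$ such that $$\int_{|\xi|\geq\varepsilon}E_1(t,\xi)\,d\xi\leq C\left\{\|v_1\|^2_{H^r}+\|v_0\|^2_{H^s}\right\}(1+t)^{-\frac1\beta},\quad\forall t\geq0.$$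
   Context: $\widehat{v}(t,\xi)$ is the solution of $(1+|\xi|^{2\delta})\widehat{v}_{tt}+|\xi|^{2\theta}\widehat{v}_t+|\xi|^{2\alpha}\widehat{v}=0$, $\widehat{v}(0)=\widehat{v}_0$, $\widehat{v}_t(0)=\widehat{v}_1$, the Fourier transform in $x$ of the solution of $v_{tt}+(-\Delta)^\delta v_{tt}+(-\Delta)^\alpha v+(-\Delta)^\theta v_t=0$, $v(0)=v_0$, $v_t(0)=v_1$. $\lesssim$ means $\leq C\cdot$ with $C$ independent of $t$ and data. *)

theory Defs
  imports "HOL-Analysis.Analysis"
begin

text \<open>Everything is stated on the Fourier side.  A tempered distribution u lies in
  H^s(R^n) iff its Fourier transform is a measurable function f with
  \<integral> (1+|xi|^2)^s |f(xi)|^2 dxi < \<infinity>; this integral is the squared H^s norm.\<close>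

definition sob_norm2 :: "real \<Rightarrow> (real^'n \<Rightarrow> complex) \<Rightarrow> ennreal" where
  "sob_norm2 s f = (\<integral>\<^sup>+ \<xi>. ennreal ((1 + (norm \<xi>)\<^sup>2) powr s * (cmod (f \<xi>))\<^sup>2) \<partial>lborel)"

definition in_H :: "real \<Rightarrow> (real^'n \<Rightarrow> complex) \<Rightarrow> bool" where
  "in_H s f \<longleftrightarrow> f \<in> borel_measurable lborel \<and> sob_norm2 s f < \<infinity>"

text \<open>w t xi = hat v(t,xi), w' t xi = hat v_t(t,xi): for every frequency xi \<noteq> 0,
  the function t \<mapsto> w t xi solves
  (1+|xi|^(2 delta)) w'' + |xi|^(2 theta) w' + |xi|^(2 alpha) w = 0 on [0,\<infinity>)
  with w 0 xi = hat v0 xi and w' 0 xi = hat v1 xi.\<close>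

definition is_fourier_sol ::
  "real \<Rightarrow> real \<Rightarrow> real \<Rightarrow> (real^'n \<Rightarrow> complex) \<Rightarrow> (real^'n \<Rightarrow> complex)
     \<Rightarrow> (real \<Rightarrow> real^'n \<Rightarrow> complex) \<Rightarrow> (real \<Rightarrow> real^'n \<Rightarrow> complex) \<Rightarrow> bool" where
  "is_fourier_sol \<delta> \<alpha> \<theta> v0 v1 w w' \<longleftrightarrow>
     (\<forall>\<xi>. \<xi> \<noteq> 0 \<longrightarrow>
        w 0 \<xi> = v0 \<xi> \<and> w' 0 \<xi> = v1 \<xi> \<and>
        (\<forall>t\<ge>0. ((\<lambda>\<tau>. w \<tau> \<xi>) has_vector_derivative w' t \<xi>) (at t within {0..}) \<and>
           (\<exists>w''. ((\<lambda>\<tau>. w' \<tau> \<xi>) has_vector_derivative w'') (at t within {0..}) \<and>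
              complex_of_real (1 + norm \<xi> powr (2*\<delta>)) * w''
              + complex_of_real (norm \<xi> powr (2*\<theta>)) * w' t \<xi>
              + complex_of_real (norm \<xi> powr (2*\<alpha>)) * w t \<xi> = 0)))"

definition E1 :: "real \<Rightarrow> real \<Rightarrow> real \<Rightarrow> (real \<Rightarrow> real^'n \<Rightarrow> complex)
     \<Rightarrow> (real \<Rightarrow> real^'n \<Rightarrow> complex) \<Rightarrow> real \<Rightarrow> real^'n \<Rightarrow> real" where
  "E1 \<delta> \<alpha> \<sigma> w w' t \<xi> =
     1/2 * norm \<xi> powr (2*\<delta> + \<sigma>) * (cmod (w' t \<xi>))\<^sup>2
     + 1/2 * norm \<xi> powr (2*\<alpha> + \<sigma>) * (cmod (w t \<xi>))\<^sup>2"

definition high_freq_energy :: "real \<Rightarrow> real \<Rightarrow> real \<Rightarrow> real \<Rightarrow> (real \<Rightarrow> real^'n \<Rightarrow> complex)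
     \<Rightarrow> (real \<Rightarrow> real^'n \<Rightarrow> complex) \<Rightarrow> real \<Rightarrow> ennreal" where
  "high_freq_energy \<delta> \<alpha> \<sigma> \<epsilon> w w' t =
     (\<integral>\<^sup>+ \<xi>. indicator {\<xi>. norm \<xi> \<ge> \<epsilon>} \<xi> * ennreal (E1 \<delta> \<alpha> \<sigma> w w' t \<xi>) \<partial>lborel)"

end

theory Submission
  imports Defs
begin

lemma decr_half:
  fixes G :: "real \<Rightarrow> real"
  assumes "t \<ge> 0"
  and d: "\<And>s. s \<ge> 0 \<Longrightarrow> \<exists>y. (G has_real_derivative y) (at s within {0..}) \<and> y \<le> 0"
  shows "G t \<le> G 0"
proof (rule DERIV_nonpos_imp_decreasing_open[OF assms(1)])
  fix x :: real assume x: "0 < x" "x < t"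
  have e: "at x within {0..} = at x" using x by (intro at_within_interior) (simp add: interior_real_atLeast)
  obtain y where "(G has_real_derivative y) (at x within {0..})" "y \<le> 0" using d[of x] x by auto
  then show "\<exists>y. (G has_real_derivative y) (at x) \<and> y \<le> 0" unfolding e by blast
next
  show "continuous_on {0..t} G"
    unfolding continuous_on_eq_continuous_within
  proof
    fix x assume x: "x \<in> {0..t}"
    obtain y where "(G has_real_derivative y) (at x within {0..})" using d[of x] x by auto
    then have "continuous (at x within {0..}) G" by (rule DERIV_continuous)
    then show "continuous (at x within {0..t}) G" by (rule continuous_within_subset) auto
  qed
qed

lemma ode_decay:
  fixes x x1 :: "real \<Rightarrow> real" and a b k t :: real
  assumes a: "a > 0" and b: "b > 0" and k: "k > 0" and t: "t \<ge> 0"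
  and sol: "\<And>s. s \<ge> 0 \<Longrightarrow> (x has_real_derivative x1 s) (at s within {0..}) \<and>
      (\<exists>x2. (x1 has_real_derivative x2) (at s within {0..}) \<and> a * x2 + b * x1 s + k * x s = 0)"
  shows "a * (x1 t)\<^sup>2 + k * (x t)\<^sup>2 \<le> 3 * (a * (x1 0)\<^sup>2 + k * (x 0)\<^sup>2) * exp (- (2/3 * min (b/a) (k/(3*b))) * t)"
proof -
  define g where "g = min (b/a) (k/(3*b))"
  have g0: "g > 0" using a b k by (simp add: g_def)
  have g1: "g \<le> b/a" and g2: "g \<le> k/(3*b)" by (auto simp: g_def)
  have ga: "g * a \<le> b" using g1 a by (simp add: field_simps)
  have gb: "3 * g * b \<le> k" using g2 b by (simp add: field_simps)
  define E where "E s = a * (x1 s)\<^sup>2 + k * (x s)\<^sup>2" for s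
  define L where "L s = E s + g * (a * x1 s * x s + b/2 * (x s)\<^sup>2)" for s
  define kp where "kp = 2/3 * g"
  have bound: "\<bar>g * (a * x1 s * x s + b/2 * (x s)\<^sup>2)\<bar> \<le> E s / 2" for s
  proof -
    define A where "A = a * (x1 s)\<^sup>2"
    define K where "K = k * (x s)\<^sup>2"
    define Z where "Z = g * b * (x s)\<^sup>2"
    define P where "P = g * a * \<bar>x1 s * x s\<bar>"
    define Q where "Q = g\<^sup>2 * a * (x s)\<^sup>2"
    have 1: "P \<le> A / 4 + Q"
    proof -
      have "0 \<le> a * (\<bar>x1 s\<bar> / 2 - g * \<bar>x s\<bar>)\<^sup>2" using a by simp
      then show ?thesis unfolding P_def A_def Q_def by (simp add: power2_eq_square algebra_simps abs_mult)
    qed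
    have "g\<^sup>2 * a \<le> g * b" using ga g0 by (simp add: power2_eq_square mult.assoc mult_left_mono)
    then have 2: "Q \<le> Z" unfolding Q_def Z_def by (simp add: mult_right_mono)
    have 3: "3 * Z \<le> K"
    proof -
      have "(3*g*b)*(x s)\<^sup>2 \<le> k*(x s)\<^sup>2" by (rule mult_right_mono[OF gb]) simp
      then show ?thesis unfolding Z_def K_def by (simp add: mult.assoc)
    qed
    have 4: "\<bar>g * (a * x1 s * x s + b/2 * (x s)\<^sup>2)\<bar> \<le> P + Z / 2"
      unfolding P_def Z_def
      using g0 a b by (simp add: abs_mult distrib_left abs_triangle_ineq[THEN order_trans] )
    have 5: "0 \<le> A" unfolding A_def using a by simp
    have 6: "E s = A + K" unfolding E_def A_def K_def by simp
    show ?thesis using 1 2 3 4 5 6 by linarith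
  qed
  have LE: "E s / 2 \<le> L s" "L s \<le> 3/2 * E s" for s using bound[of s] unfolding L_def by linarith+
  have "L t * exp (kp * t) \<le> L 0 * exp (kp * 0)"
  proof (rule decr_half[OF t])
    fix s :: real assume s: "s \<ge> 0"
    from sol[OF s] obtain x2 where dx: "(x has_real_derivative x1 s) (at s within {0..})"
      and dx1: "(x1 has_real_derivative x2) (at s within {0..})" and eq: "a * x2 + b * x1 s + k * x s = 0" by blast
    define Ld where "Ld = 2*a*x1 s*x2 + 2*k*x s*x1 s + g*(a*x2*x s + a*x1 s*x1 s + b*x s*x1 s)"
    have dL: "(L has_real_derivative Ld) (at s within {0..})"
      unfolding L_def[abs_def] E_def Ld_def
      by (auto intro!: derivative_eq_intros dx dx1 simp: power2_eq_square algebra_simps)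
    have dG: "((\<lambda>s. L s * exp (kp * s)) has_real_derivative (Ld * exp (kp * s) + L s * (exp (kp * s) * kp))) (at s within {0..})"
      by (auto intro!: derivative_eq_intros dL)
    have "Ld - (-2*b*(x1 s)\<^sup>2 + g*a*(x1 s)\<^sup>2 - g*k*(x s)\<^sup>2) = (2*x1 s + g*x s)*(a*x2+b*x1 s+k*x s)"
      unfolding Ld_def by (simp add: algebra_simps power2_eq_square)
    then have "Ld = -2*b*(x1 s)\<^sup>2 + g*a*(x1 s)\<^sup>2 - g*k*(x s)\<^sup>2" using eq by simp
    also have "\<dots> \<le> - g * E s"
    proof -
      have "g*a*(x1 s)\<^sup>2 \<le> b * (x1 s)\<^sup>2" using ga by (simp add: mult_right_mono)
      moreover have "0 \<le> b * (x1 s)\<^sup>2" using b by simp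
      moreover have "g * E s = g*a*(x1 s)\<^sup>2 + g*k*(x s)\<^sup>2" unfolding E_def by (simp add: algebra_simps)
      ultimately show ?thesis by linarith
    qed
    finally have Ld_le: "Ld \<le> - g * E s" .
    have "kp * L s \<le> kp * (3/2 * E s)" using LE(2)[of s] g0 unfolding kp_def by (intro mult_left_mono) auto
    moreover have "kp * (3/2 * E s) = g * E s" unfolding kp_def by simp
    ultimately have "Ld + kp * L s \<le> 0" using Ld_le by linarith
    moreover have "Ld * exp (kp * s) + L s * (exp (kp * s) * kp) = exp (kp * s) * (Ld + kp * L s)" by (simp add: algebra_simps)
    ultimately have "Ld * exp (kp * s) + L s * (exp (kp * s) * kp) \<le> 0" by (simp add: mult_nonneg_nonpos)
    then show "\<exists>y. ((\<lambda>s. L s * exp (kp * s)) has_real_derivative y) (at s within {0..}) \<and> y \<le> 0" using dG by blast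
  qed
  then have "L t \<le> L 0 / exp (kp * t)"
    by (simp add: pos_le_divide_eq)
  also have "L 0 / exp (kp * t) = L 0 * exp (- kp * t)" by (simp add: exp_minus divide_inverse)
  finally have "L t \<le> L 0 * exp (- kp * t)" .
  moreover have "L 0 * exp (- kp * t) \<le> (3/2 * E 0) * exp (- kp * t)" using LE(2)[of 0] by (rule mult_right_mono) simp
  moreover have "(3/2 * E 0) * exp (- kp * t) = 3/2 * (E 0 * exp (- kp * t))" by simp
  ultimately have "E t \<le> 3 * (E 0 * exp (- kp * t))"
    using LE(1)[of t] by linarith
  then show ?thesis unfolding E_def kp_def g_def by (simp only: mult.assoc)
qed

lemma cplx_decay:
  fixes z z' :: "real \<Rightarrow> complex" and a b k t :: real
  assumes a: "a > 0" and b: "b > 0" and k: "k > 0" and t: "t \<ge> 0"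
  and sol: "\<And>s. s \<ge> 0 \<Longrightarrow> (z has_vector_derivative z' s) (at s within {0..}) \<and>
      (\<exists>z2. (z' has_vector_derivative z2) (at s within {0..}) \<and>
         complex_of_real a * z2 + complex_of_real b * z' s + complex_of_real k * z s = 0)"
  shows "a * (cmod (z' t))\<^sup>2 + k * (cmod (z t))\<^sup>2
    \<le> 3 * (a * (cmod (z' 0))\<^sup>2 + k * (cmod (z 0))\<^sup>2) * exp (- (2/3 * min (b/a) (k/(3*b))) * t)"
proof -
  let ?e = "exp (- (2/3 * min (b/a) (k/(3*b))) * t)"
  have R: "a * (Re (z' t))\<^sup>2 + k * (Re (z t))\<^sup>2 \<le> 3 * (a * (Re (z' 0))\<^sup>2 + k * (Re (z 0))\<^sup>2) * ?e"
  proof (rule ode_decay[OF a b k t])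
    fix s :: real assume s: "s \<ge> 0"
    from sol[OF s] obtain z2 where d1: "(z has_vector_derivative z' s) (at s within {0..})"
      and d2: "(z' has_vector_derivative z2) (at s within {0..})"
      and e: "complex_of_real a * z2 + complex_of_real b * z' s + complex_of_real k * z s = 0" by blast
    have "Re (complex_of_real a * z2 + complex_of_real b * z' s + complex_of_real k * z s) = 0" using e by simp
    then have "a * Re z2 + b * Re (z' s) + k * Re (z s) = 0" by simp
    then show "((\<lambda>s. Re (z s)) has_real_derivative Re (z' s)) (at s within {0..}) \<and>
      (\<exists>x2. ((\<lambda>s. Re (z' s)) has_real_derivative x2) (at s within {0..}) \<and> a * x2 + b * Re (z' s) + k * Re (z s) = 0)"
      using has_field_derivative_Re[OF d1] has_field_derivative_Re[OF d2] by blast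
  qed
  have I: "a * (Im (z' t))\<^sup>2 + k * (Im (z t))\<^sup>2 \<le> 3 * (a * (Im (z' 0))\<^sup>2 + k * (Im (z 0))\<^sup>2) * ?e"
  proof (rule ode_decay[OF a b k t])
    fix s :: real assume s: "s \<ge> 0"
    from sol[OF s] obtain z2 where d1: "(z has_vector_derivative z' s) (at s within {0..})"
      and d2: "(z' has_vector_derivative z2) (at s within {0..})"
      and e: "complex_of_real a * z2 + complex_of_real b * z' s + complex_of_real k * z s = 0" by blast
    have "Im (complex_of_real a * z2 + complex_of_real b * z' s + complex_of_real k * z s) = 0" using e by simp
    then have "a * Im z2 + b * Im (z' s) + k * Im (z s) = 0" by simp
    then show "((\<lambda>s. Im (z s)) has_real_derivative Im (z' s)) (at s within {0..}) \<and>
      (\<exists>x2. ((\<lambda>s. Im (z' s)) has_real_derivative x2) (at s within {0..}) \<and> a * x2 + b * Im (z' s) + k * Im (z s) = 0)"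
      using has_field_derivative_Im[OF d1] has_field_derivative_Im[OF d2] by blast
  qed
  have "a * (cmod (z' t))\<^sup>2 + k * (cmod (z t))\<^sup>2 = (a * (Re (z' t))\<^sup>2 + k * (Re (z t))\<^sup>2) + (a * (Im (z' t))\<^sup>2 + k * (Im (z t))\<^sup>2)"
    by (simp add: cmod_power2 algebra_simps)
  also have "\<dots> \<le> 3 * (a * (Re (z' 0))\<^sup>2 + k * (Re (z 0))\<^sup>2) * ?e + 3 * (a * (Im (z' 0))\<^sup>2 + k * (Im (z 0))\<^sup>2) * ?e"
    using R I by linarith
  also have "\<dots> = 3 * (a * (cmod (z' 0))\<^sup>2 + k * (cmod (z 0))\<^sup>2) * ?e"
    by (simp add: cmod_power2 algebra_simps)
  finally show ?thesis .
qed

lemma pt_main: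
  fixes w w' :: "real \<Rightarrow> real^'n \<Rightarrow> complex"
  assumes sol: "is_fourier_sol \<delta> \<alpha> \<theta> v0 v1 w w'" and xi: "\<xi> \<noteq> 0" and t: "t \<ge> 0"
  shows "E1 \<delta> \<alpha> \<sigma> w w' t \<xi> \<le> 3/2 * norm \<xi> powr \<sigma> *
     ((1 + norm \<xi> powr (2*\<delta>)) * (cmod (v1 \<xi>))\<^sup>2 + norm \<xi> powr (2*\<alpha>) * (cmod (v0 \<xi>))\<^sup>2) *
     exp (- (2/3 * min (norm \<xi> powr (2*\<theta>) / (1 + norm \<xi> powr (2*\<delta>)))
                       (norm \<xi> powr (2*\<alpha>) / (3 * norm \<xi> powr (2*\<theta>)))) * t)"
proof -
  define \<rho> where "\<rho> = norm \<xi>"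
  have rho: "\<rho> > 0" using xi by (simp add: \<rho>_def)
  define a where "a = 1 + \<rho> powr (2*\<delta>)"
  define b where "b = \<rho> powr (2*\<theta>)"
  define k where "k = \<rho> powr (2*\<alpha>)"
  have a: "a > 0" unfolding a_def by (simp add: add_pos_nonneg)
  have b: "b > 0" unfolding b_def using rho by simp
  have k: "k > 0" unfolding k_def using rho by simp
  let ?e = "exp (- (2/3 * min (b/a) (k/(3*b))) * t)"
  from sol xi have S: "w 0 \<xi> = v0 \<xi>" "w' 0 \<xi> = v1 \<xi>"
    and D: "\<And>s. s \<ge> 0 \<Longrightarrow> ((\<lambda>\<tau>. w \<tau> \<xi>) has_vector_derivative w' s \<xi>) (at s within {0..}) \<and>
           (\<exists>w''. ((\<lambda>\<tau>. w' \<tau> \<xi>) has_vector_derivative w'') (at s within {0..}) \<and>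
              complex_of_real a * w'' + complex_of_real b * w' s \<xi> + complex_of_real k * w s \<xi> = 0)"
    unfolding is_fourier_sol_def a_def b_def k_def \<rho>_def by blast+
  have main: "a * (cmod (w' t \<xi>))\<^sup>2 + k * (cmod (w t \<xi>))\<^sup>2 \<le> 3 * (a * (cmod (v1 \<xi>))\<^sup>2 + k * (cmod (v0 \<xi>))\<^sup>2) * ?e"
    using cplx_decay[where z="\<lambda>\<tau>. w \<tau> \<xi>" and z'="\<lambda>\<tau>. w' \<tau> \<xi>", OF a b k t D] S by simp
  have "E1 \<delta> \<alpha> \<sigma> w w' t \<xi> = 1/2 * \<rho> powr \<sigma> * (\<rho> powr (2*\<delta>) * (cmod (w' t \<xi>))\<^sup>2 + k * (cmod (w t \<xi>))\<^sup>2)"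
    unfolding E1_def k_def \<rho>_def[symmetric] using rho by (simp add: powr_add algebra_simps)
  also have "\<dots> \<le> 1/2 * \<rho> powr \<sigma> * (a * (cmod (w' t \<xi>))\<^sup>2 + k * (cmod (w t \<xi>))\<^sup>2)"
    by (intro mult_left_mono add_right_mono mult_right_mono) (auto simp: a_def)
  also have "\<dots> \<le> 1/2 * \<rho> powr \<sigma> * (3 * (a * (cmod (v1 \<xi>))\<^sup>2 + k * (cmod (v0 \<xi>))\<^sup>2) * ?e)"
    by (intro mult_left_mono main) auto
  finally show ?thesis unfolding a_def b_def k_def \<rho>_def by (simp add: algebra_simps)
qed

lemma wt_base:
  fixes u P c p :: real
  assumes "0 < c" "c \<le> 1" "c * P \<le> u" "u \<le> P" "0 < u"
  shows "u powr p \<le> max 1 (c powr p) * P powr p"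
proof (cases "p \<ge> 0")
  case True
  have "u powr p \<le> P powr p" using assms True by (intro powr_mono2) auto
  also have "\<dots> = 1 * P powr p" by simp
  also have "\<dots> \<le> max 1 (c powr p) * P powr p" by (intro mult_right_mono) auto
  finally show ?thesis .
next
  case False
  have "u powr p \<le> (c * P) powr p" using assms False by (intro powr_mono2') auto
  also have "\<dots> = c powr p * P powr p" using assms by (simp add: powr_mult)
  also have "\<dots> \<le> max 1 (c powr p) * P powr p" by (intro mult_right_mono) auto
  finally show ?thesis .
qed

lemma exp_poly:
  fixes y p :: real
  assumes y: "y \<ge> 0" and p: "p > 0"
  shows "exp (- y) \<le> max 1 p powr p * (1 + y) powr (- p)"
proof -
  define M where "M = max 1 p"
  have M: "M \<ge> 1" unfolding M_def by simp
  have "1 + y \<le> M * (1 + y / p)"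
  proof (cases "p \<ge> 1")
    case True
    then have "M * (1 + y/p) = p + y" unfolding M_def using p by (simp add: field_simps)
    then show ?thesis using True by simp
  next
    case False
    then have "y * p \<le> y * 1" using y p by (intro mult_left_mono) auto
    then have "y \<le> y / p" using y p by (simp add: le_divide_eq)
    then show ?thesis using False unfolding M_def by simp
  qed
  then have "(1 + y) powr p \<le> (M * (1 + y / p)) powr p" using y p by (intro powr_mono2) auto
  also have "\<dots> = M powr p * (1 + y / p) powr p" using M y p by (simp add: powr_mult)
  also have "(1 + y / p) powr p \<le> exp (y / p) powr p"
    using y p by (intro powr_mono2) (auto simp: exp_ge_add_one_self)
  also have "exp (y / p) powr p = exp y" using p by (simp add: powr_def)
  finally have 1: "(1 + y) powr p \<le> M powr p * exp y"
    using M by (simp add: mult_left_mono)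
  have "exp (- y) = 1 / exp y" by (simp add: exp_minus field_simps)
  also have "\<dots> \<le> M powr p / (1 + y) powr p"
    using 1 y by (simp add: field_simps)
  also have "\<dots> = M powr p * (1 + y) powr (- p)" using y by (simp add: powr_minus divide_inverse)
  finally show ?thesis unfolding M_def .
qed


lemma energy_int:
  fixes w w' :: "real \<Rightarrow> real^'n \<Rightarrow> complex" and v0 v1 :: "real^'n \<Rightarrow> complex"
  assumes K: "K \<ge> 0" and m0: "v0 \<in> borel_measurable lborel" and m1: "v1 \<in> borel_measurable lborel"
  and pt: "\<And>\<xi>. \<epsilon> \<le> norm \<xi> \<Longrightarrow> E1 \<delta> \<alpha> \<sigma> w w' t \<xi> \<le>
      K * ((1 + (norm \<xi>)\<^sup>2) powr r * (cmod (v1 \<xi>))\<^sup>2 + (1 + (norm \<xi>)\<^sup>2) powr s * (cmod (v0 \<xi>))\<^sup>2)"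
  shows "high_freq_energy \<delta> \<alpha> \<sigma> \<epsilon> w w' t \<le> ennreal K * (sob_norm2 r v1 + sob_norm2 s v0)"
proof -
  define A where "A \<xi> = (1 + (norm \<xi>)\<^sup>2) powr r * (cmod (v1 \<xi>))\<^sup>2" for \<xi>
  define B where "B \<xi> = (1 + (norm \<xi>)\<^sup>2) powr s * (cmod (v0 \<xi>))\<^sup>2" for \<xi>
  have [measurable]: "v0 \<in> borel_measurable lborel" "v1 \<in> borel_measurable lborel" using m0 m1 by auto
  have mA: "(\<lambda>\<xi>. ennreal (A \<xi>)) \<in> borel_measurable lborel" unfolding A_def by measurable
  have mB: "(\<lambda>\<xi>. ennreal (B \<xi>)) \<in> borel_measurable lborel" unfolding B_def by measurable
  have A0: "A \<xi> \<ge> 0" and B0: "B \<xi> \<ge> 0" for \<xi> unfolding A_def B_def by auto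
  have "high_freq_energy \<delta> \<alpha> \<sigma> \<epsilon> w w' t \<le> (\<integral>\<^sup>+ \<xi>. ennreal K * (ennreal (A \<xi>) + ennreal (B \<xi>)) \<partial>lborel)"
    unfolding high_freq_energy_def
  proof (rule nn_integral_mono)
    fix \<xi> :: "real^'n"
    show "indicator {\<xi>. \<epsilon> \<le> norm \<xi>} \<xi> * ennreal (E1 \<delta> \<alpha> \<sigma> w w' t \<xi>) \<le> ennreal K * (ennreal (A \<xi>) + ennreal (B \<xi>))"
    proof (cases "\<epsilon> \<le> norm \<xi>")
      case True
      have "ennreal (E1 \<delta> \<alpha> \<sigma> w w' t \<xi>) \<le> ennreal (K * (A \<xi> + B \<xi>))"
        using pt[OF True] unfolding A_def B_def by (intro ennreal_leI) simp
      also have "\<dots> = ennreal K * (ennreal (A \<xi>) + ennreal (B \<xi>))"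
        using K A0[of \<xi>] B0[of \<xi>] by (simp add: ennreal_mult ennreal_plus)
      finally show ?thesis using True by simp
    next
      case False then show ?thesis by simp
    qed
  qed
  also have "\<dots> = ennreal K * ((\<integral>\<^sup>+ \<xi>. ennreal (A \<xi>) \<partial>lborel) + (\<integral>\<^sup>+ \<xi>. ennreal (B \<xi>) \<partial>lborel))"
    using mA mB by (simp add: nn_integral_cmult nn_integral_add)
  also have "\<dots> = ennreal K * (sob_norm2 r v1 + sob_norm2 s v0)"
    unfolding sob_norm2_def A_def B_def by simp
  finally show ?thesis .
qed

lemma uP:
  fixes \<epsilon> \<rho> :: real
  assumes "0 < \<epsilon>" "\<epsilon> < 1" "\<epsilon> \<le> \<rho>"
  shows "\<epsilon>\<^sup>2/2 * (1 + \<rho>\<^sup>2) \<le> \<rho>\<^sup>2" "\<rho>\<^sup>2 \<le> 1 + \<rho>\<^sup>2" "0 < \<rho>\<^sup>2" "0 < \<epsilon>\<^sup>2/2" "\<epsilon>\<^sup>2/2 \<le> 1"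
proof -
  have e2: "\<epsilon>\<^sup>2 \<le> \<rho>\<^sup>2" using assms by (intro power_mono) auto
  have e1: "\<epsilon>\<^sup>2 \<le> 1" using assms by (simp add: power_le_one)
  have "\<epsilon>\<^sup>2 * \<rho>\<^sup>2 \<le> 1 * \<rho>\<^sup>2" using e1 by (intro mult_right_mono) auto
  then show "\<epsilon>\<^sup>2/2 * (1 + \<rho>\<^sup>2) \<le> \<rho>\<^sup>2" using e2 by (simp add: algebra_simps)
  show "\<rho>\<^sup>2 \<le> 1 + \<rho>\<^sup>2" by simp
  show "0 < \<rho>\<^sup>2" using assms by simp
  show "0 < \<epsilon>\<^sup>2/2" using assms by simp
  show "\<epsilon>\<^sup>2/2 \<le> 1" using e1 by simp
qed

lemma rho_pow:
  fixes \<rho> :: real assumes "\<rho> > 0" shows "\<rho> powr (2 * q) = (\<rho>\<^sup>2) powr q"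
proof -
  have "\<rho> powr (2 * q) = (\<rho> powr 2) powr q" by (simp add: powr_powr)
  also have "\<rho> powr 2 = \<rho>\<^sup>2" using assms by (simp add: powr_numeral)
  finally show ?thesis .
qed

lemma weights:
  fixes \<epsilon> \<rho> :: real
  assumes "0 < \<epsilon>" "\<epsilon> < 1" "\<epsilon> \<le> \<rho>" "0 \<le> \<delta>"
  shows "\<rho> powr \<sigma> * (1 + \<rho> powr (2*\<delta>)) \<le> 2 * max 1 ((\<epsilon>\<^sup>2/2) powr (\<sigma>/2)) * (1 + \<rho>\<^sup>2) powr (\<delta> + \<sigma>/2)"
    "\<rho> powr \<sigma> * \<rho> powr (2*\<alpha>) \<le> max 1 ((\<epsilon>\<^sup>2/2) powr (\<alpha> + \<sigma>/2)) * (1 + \<rho>\<^sup>2) powr (\<alpha> + \<sigma>/2)"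
proof -
  note u = uP[OF assms(1-3)]
  have rho: "\<rho> > 0" using assms by simp
  have s1: "\<rho> powr \<sigma> \<le> max 1 ((\<epsilon>\<^sup>2/2) powr (\<sigma>/2)) * (1 + \<rho>\<^sup>2) powr (\<sigma>/2)"
    using rho_pow[OF rho, of "\<sigma>/2"] wt_base[OF u(4) u(5) u(1) u(2) u(3), of "\<sigma>/2"] by simp
  have "\<rho> powr (2*\<delta>) \<le> (1 + \<rho>\<^sup>2) powr \<delta>"
    unfolding rho_pow[OF rho] using u assms by (intro powr_mono2) auto
  moreover have "1 \<le> (1 + \<rho>\<^sup>2) powr \<delta>" using assms by (intro ge_one_powr_ge_zero) auto
  ultimately have d1: "1 + \<rho> powr (2*\<delta>) \<le> 2 * (1 + \<rho>\<^sup>2) powr \<delta>" by linarith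
  have "\<rho> powr \<sigma> * (1 + \<rho> powr (2*\<delta>)) \<le> (max 1 ((\<epsilon>\<^sup>2/2) powr (\<sigma>/2)) * (1 + \<rho>\<^sup>2) powr (\<sigma>/2)) * (2 * (1 + \<rho>\<^sup>2) powr \<delta>)"
    using s1 d1 by (intro mult_mono) auto
  also have "\<dots> = 2 * max 1 ((\<epsilon>\<^sup>2/2) powr (\<sigma>/2)) * ((1 + \<rho>\<^sup>2) powr \<delta> * (1 + \<rho>\<^sup>2) powr (\<sigma>/2))"
    by (simp add: algebra_simps)
  also have "(1 + \<rho>\<^sup>2) powr \<delta> * (1 + \<rho>\<^sup>2) powr (\<sigma>/2) = (1 + \<rho>\<^sup>2) powr (\<delta> + \<sigma>/2)"
    by (simp add: powr_add)
  finally show "\<rho> powr \<sigma> * (1 + \<rho> powr (2*\<delta>)) \<le> 2 * max 1 ((\<epsilon>\<^sup>2/2) powr (\<sigma>/2)) * (1 + \<rho>\<^sup>2) powr (\<delta> + \<sigma>/2)" .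
  have "\<rho> powr \<sigma> * \<rho> powr (2*\<alpha>) = \<rho> powr (2 * (\<alpha> + \<sigma>/2))" by (simp add: powr_add[symmetric] algebra_simps)
  also have "\<dots> = (\<rho>\<^sup>2) powr (\<alpha> + \<sigma>/2)" by (rule rho_pow[OF rho])
  also have "\<dots> \<le> max 1 ((\<epsilon>\<^sup>2/2) powr (\<alpha> + \<sigma>/2)) * (1 + \<rho>\<^sup>2) powr (\<alpha> + \<sigma>/2)"
    by (rule wt_base[OF u(4) u(5) u(1) u(2) u(3)])
  finally show "\<rho> powr \<sigma> * \<rho> powr (2*\<alpha>) \<le> max 1 ((\<epsilon>\<^sup>2/2) powr (\<alpha> + \<sigma>/2)) * (1 + \<rho>\<^sup>2) powr (\<alpha> + \<sigma>/2)" .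
qed

lemma second_rate:
  fixes \<epsilon> \<rho> :: real
  assumes "0 < \<epsilon>" "\<epsilon> \<le> \<rho>" "\<theta> \<le> \<alpha>"
  shows "\<epsilon> powr (2*\<alpha> - 2*\<theta>) / 3 \<le> \<rho> powr (2*\<alpha>) / (3 * \<rho> powr (2*\<theta>))"
proof -
  have "\<rho> powr (2*\<alpha>) / (3 * \<rho> powr (2*\<theta>)) = \<rho> powr (2*\<alpha> - 2*\<theta>) / 3" using assms by (simp add: powr_diff)
  moreover have "\<epsilon> powr (2*\<alpha> - 2*\<theta>) \<le> \<rho> powr (2*\<alpha> - 2*\<theta>)" using assms by (intro powr_mono2) auto
  ultimately show ?thesis by simp
qed

lemma rate_i:
  fixes \<epsilon> \<rho> :: real
  assumes "0 < \<epsilon>" "\<epsilon> < 1" "\<epsilon> \<le> \<rho>" "0 \<le> \<delta>" "\<delta> \<le> \<theta>" "\<theta> \<le> \<alpha>"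
  shows "min (\<epsilon> powr (2*\<theta>) / 2) (\<epsilon> powr (2*\<alpha> - 2*\<theta>) / 3)
    \<le> min (\<rho> powr (2*\<theta>) / (1 + \<rho> powr (2*\<delta>))) (\<rho> powr (2*\<alpha>) / (3 * \<rho> powr (2*\<theta>)))"
proof -
  have rho: "\<rho> > 0" using assms by simp
  have den: "1 + \<rho> powr (2*\<delta>) > 0" by (simp add: add_pos_nonneg)
  have "\<epsilon> powr (2*\<theta>) \<le> 1 powr (2*\<theta>)" using assms by (intro powr_mono2) auto
  then have e1: "\<epsilon> powr (2*\<theta>) \<le> 1" by simp
  have "\<epsilon> powr (2*\<theta>) / 2 * (1 + \<rho> powr (2*\<delta>)) \<le> \<rho> powr (2*\<theta>)"
  proof (cases "\<rho> \<ge> 1")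
    case True
    have "\<rho> powr (2*\<delta>) \<le> \<rho> powr (2*\<theta>)" using True assms by (intro powr_mono) auto
    moreover have "1 \<le> \<rho> powr (2*\<theta>)" using True assms by (intro ge_one_powr_ge_zero) auto
    ultimately have "1 + \<rho> powr (2*\<delta>) \<le> 2 * \<rho> powr (2*\<theta>)" by linarith
    then have "1 / 2 * (1 + \<rho> powr (2*\<delta>)) \<le> \<rho> powr (2*\<theta>)" by (simp add: field_simps)
    have "\<epsilon> powr (2*\<theta>) / 2 * (1 + \<rho> powr (2*\<delta>)) \<le> 1 / 2 * (1 + \<rho> powr (2*\<delta>))"
      using e1 by (intro mult_right_mono) (auto simp: add_nonneg_nonneg)
    also note \<open>1 / 2 * (1 + \<rho> powr (2*\<delta>)) \<le> \<rho> powr (2*\<theta>)\<close>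
    finally show ?thesis .
  next
    case False
    have "\<rho> powr (2*\<delta>) \<le> 1 powr (2*\<delta>)" using False assms by (intro powr_mono2) auto
    then have "\<rho> powr (2*\<delta>) \<le> 1" by simp
    then have "\<epsilon> powr (2*\<theta>) / 2 * (1 + \<rho> powr (2*\<delta>)) \<le> \<epsilon> powr (2*\<theta>) / 2 * 2"
      by (intro mult_left_mono) auto
    also have "\<dots> \<le> \<rho> powr (2*\<theta>)" using assms by (simp add: powr_mono2)
    finally show ?thesis .
  qed
  then have "\<epsilon> powr (2*\<theta>) / 2 \<le> \<rho> powr (2*\<theta>) / (1 + \<rho> powr (2*\<delta>))" using den by (simp add: le_divide_eq)
  moreover have "\<epsilon> powr (2*\<alpha> - 2*\<theta>) / 3 \<le> \<rho> powr (2*\<alpha>) / (3 * \<rho> powr (2*\<theta>))"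
    using assms by (intro second_rate) auto
  ultimately show ?thesis by (auto simp: min_def)
qed

lemma rate_ii:
  fixes \<epsilon> \<rho> :: real
  assumes "0 < \<epsilon>" "\<epsilon> < 1" "\<epsilon> \<le> \<rho>" "0 \<le> \<theta>" "\<theta> < \<delta>" "\<theta> \<le> \<alpha>"
  shows "min ((\<epsilon>\<^sup>2/2) powr \<theta> / 2) (\<epsilon> powr (2*\<alpha> - 2*\<theta>) / 3) * (1 + \<rho>\<^sup>2) powr (\<theta> - \<delta>)
    \<le> min (\<rho> powr (2*\<theta>) / (1 + \<rho> powr (2*\<delta>))) (\<rho> powr (2*\<alpha>) / (3 * \<rho> powr (2*\<theta>)))"
proof -
  note u = uP[OF assms(1-3)]
  have rho: "\<rho> > 0" using assms by simp
  define P where "P = 1 + \<rho>\<^sup>2"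
  have P1: "P \<ge> 1" unfolding P_def by simp
  have den: "1 + \<rho> powr (2*\<delta>) > 0" by (simp add: add_pos_nonneg)
  have m1: "P powr (\<theta> - \<delta>) \<le> 1"
  proof -
    have "P powr (\<theta> - \<delta>) \<le> P powr 0" using P1 assms by (intro powr_mono) auto
    then show ?thesis using P1 by simp
  qed
  have m0: "P powr (\<theta> - \<delta>) \<ge> 0" by simp
  have "(\<epsilon>\<^sup>2/2 * P) powr \<theta> \<le> (\<rho>\<^sup>2) powr \<theta>" using u assms unfolding P_def by (intro powr_mono2) auto
  moreover have "(\<epsilon>\<^sup>2/2 * P) powr \<theta> = (\<epsilon>\<^sup>2/2) powr \<theta> * P powr \<theta>"
    using u P1 powr_mult[of "\<epsilon>\<^sup>2/2" P \<theta>] by simp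
  ultimately have A: "(\<epsilon>\<^sup>2/2) powr \<theta> * P powr \<theta> \<le> \<rho> powr (2*\<theta>)"
    unfolding rho_pow[OF rho] by simp
  have "\<rho> powr (2*\<delta>) \<le> P powr \<delta>"
    unfolding rho_pow[OF rho] P_def using u assms by (intro powr_mono2) auto
  moreover have "1 \<le> P powr \<delta>" using assms P1 by (intro ge_one_powr_ge_zero) auto
  ultimately have B: "1 + \<rho> powr (2*\<delta>) \<le> 2 * P powr \<delta>" by linarith
  have "(\<epsilon>\<^sup>2/2) powr \<theta> / 2 * P powr (\<theta> - \<delta>) * (1 + \<rho> powr (2*\<delta>))
      \<le> (\<epsilon>\<^sup>2/2) powr \<theta> / 2 * P powr (\<theta> - \<delta>) * (2 * P powr \<delta>)"
    using B by (intro mult_left_mono) auto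
  also have "\<dots> = (\<epsilon>\<^sup>2/2) powr \<theta> * (P powr (\<theta> - \<delta>) * P powr \<delta>)" by simp
  also have "P powr (\<theta> - \<delta>) * P powr \<delta> = P powr \<theta>" using P1 by (simp add: powr_add[symmetric])
  finally have "(\<epsilon>\<^sup>2/2) powr \<theta> / 2 * P powr (\<theta> - \<delta>) * (1 + \<rho> powr (2*\<delta>)) \<le> \<rho> powr (2*\<theta>)"
    using A by simp
  then have C1: "(\<epsilon>\<^sup>2/2) powr \<theta> / 2 * P powr (\<theta> - \<delta>) \<le> \<rho> powr (2*\<theta>) / (1 + \<rho> powr (2*\<delta>))"
    using den by (simp add: le_divide_eq)
  have "\<epsilon> powr (2*\<alpha> - 2*\<theta>) / 3 * P powr (\<theta> - \<delta>) \<le> \<epsilon> powr (2*\<alpha> - 2*\<theta>) / 3 * 1"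
    using m1 by (intro mult_left_mono) auto
  also have "\<dots> \<le> \<rho> powr (2*\<alpha>) / (3 * \<rho> powr (2*\<theta>))" using assms second_rate[of \<epsilon> \<rho> \<theta> \<alpha>] by simp
  finally have C2: "\<epsilon> powr (2*\<alpha> - 2*\<theta>) / 3 * P powr (\<theta> - \<delta>) \<le> \<rho> powr (2*\<alpha>) / (3 * \<rho> powr (2*\<theta>))" .
  have "min ((\<epsilon>\<^sup>2/2) powr \<theta> / 2) (\<epsilon> powr (2*\<alpha> - 2*\<theta>) / 3) * P powr (\<theta> - \<delta>)
      \<le> (\<epsilon>\<^sup>2/2) powr \<theta> / 2 * P powr (\<theta> - \<delta>)" by (intro mult_right_mono) auto
  moreover have "min ((\<epsilon>\<^sup>2/2) powr \<theta> / 2) (\<epsilon> powr (2*\<alpha> - 2*\<theta>) / 3) * P powr (\<theta> - \<delta>)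
      \<le> \<epsilon> powr (2*\<alpha> - 2*\<theta>) / 3 * P powr (\<theta> - \<delta>)" by (intro mult_right_mono) auto
  ultimately show ?thesis using C1 C2 unfolding P_def by (auto simp: min_def)
qed


lemma pt_core:
  fixes w w' :: "real \<Rightarrow> real^'n \<Rightarrow> complex"
  assumes sol: "is_fourier_sol \<delta> \<alpha> \<theta> v0 v1 w w'"
    and e: "0 < \<epsilon>" "\<epsilon> < 1" "\<epsilon> \<le> norm \<xi>" and t: "t \<ge> 0" and d: "0 \<le> \<delta>" and F: "F \<ge> 0"
    and r: "r = \<delta> + \<sigma>/2 + q" and s: "s = \<alpha> + \<sigma>/2 + q"
    and ex: "exp (- (2/3 * min (norm \<xi> powr (2*\<theta>) / (1 + norm \<xi> powr (2*\<delta>)))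
                       (norm \<xi> powr (2*\<alpha>) / (3 * norm \<xi> powr (2*\<theta>)))) * t) \<le> F * (1 + (norm \<xi>)\<^sup>2) powr q"
  shows "E1 \<delta> \<alpha> \<sigma> w w' t \<xi> \<le> 3/2 * max (2 * max 1 ((\<epsilon>\<^sup>2/2) powr (\<sigma>/2))) (max 1 ((\<epsilon>\<^sup>2/2) powr (\<alpha> + \<sigma>/2))) * F *
      ((1 + (norm \<xi>)\<^sup>2) powr r * (cmod (v1 \<xi>))\<^sup>2 + (1 + (norm \<xi>)\<^sup>2) powr s * (cmod (v0 \<xi>))\<^sup>2)"
proof -
  define \<rho> where "\<rho> = norm \<xi>"
  have xi: "\<xi> \<noteq> 0" using e by auto
  define P where "P = 1 + \<rho>\<^sup>2"
  have P0: "P > 0" unfolding P_def by (simp add: add_pos_nonneg)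
  define Kw where "Kw = max (2 * max 1 ((\<epsilon>\<^sup>2/2) powr (\<sigma>/2))) (max 1 ((\<epsilon>\<^sup>2/2) powr (\<alpha> + \<sigma>/2)))"
  define a where "a = 1 + \<rho> powr (2*\<delta>)"
  define k where "k = \<rho> powr (2*\<alpha>)"
  define ee where "ee = exp (- (2/3 * min (\<rho> powr (2*\<theta>) / (1 + \<rho> powr (2*\<delta>)))
                       (\<rho> powr (2*\<alpha>) / (3 * \<rho> powr (2*\<theta>)))) * t)"
  define X where "X = \<rho> powr \<sigma> * (a * (cmod (v1 \<xi>))\<^sup>2 + k * (cmod (v0 \<xi>))\<^sup>2)"
  have X0: "X \<ge> 0" unfolding X_def a_def k_def by (auto intro!: add_nonneg_nonneg mult_nonneg_nonneg)
  have W: "\<rho> powr \<sigma> * a \<le> 2 * max 1 ((\<epsilon>\<^sup>2/2) powr (\<sigma>/2)) * P powr (\<delta> + \<sigma>/2)"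
     "\<rho> powr \<sigma> * k \<le> max 1 ((\<epsilon>\<^sup>2/2) powr (\<alpha> + \<sigma>/2)) * P powr (\<alpha> + \<sigma>/2)"
    unfolding a_def k_def P_def using weights(1)[OF e(1,2), where \<rho>=\<rho> and \<delta>=\<delta> and \<sigma>=\<sigma>] weights(2)[OF e(1,2), where \<rho>=\<rho> and \<delta>=\<delta> and \<sigma>=\<sigma> and \<alpha>=\<alpha>] e d by (auto simp: \<rho>_def)
  have W1: "\<rho> powr \<sigma> * a \<le> Kw * P powr (\<delta> + \<sigma>/2)"
    using W(1) unfolding Kw_def by (rule order_trans) (intro mult_right_mono, auto)
  have W2: "\<rho> powr \<sigma> * k \<le> Kw * P powr (\<alpha> + \<sigma>/2)"
    using W(2) unfolding Kw_def by (rule order_trans) (intro mult_right_mono, auto)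
  have "E1 \<delta> \<alpha> \<sigma> w w' t \<xi> \<le> 3/2 * X * ee"
    using pt_main[OF sol xi t, of \<sigma>] unfolding X_def ee_def a_def k_def \<rho>_def by simp
  also have "\<dots> \<le> 3/2 * X * (F * P powr q)"
    using ex X0 unfolding ee_def P_def \<rho>_def by (intro mult_left_mono) auto
  also have "\<dots> = 3/2 * F * ((\<rho> powr \<sigma> * a) * P powr q * (cmod (v1 \<xi>))\<^sup>2 + (\<rho> powr \<sigma> * k) * P powr q * (cmod (v0 \<xi>))\<^sup>2)"
    unfolding X_def by (simp add: algebra_simps)
  also have "\<dots> \<le> 3/2 * F * ((Kw * P powr (\<delta> + \<sigma>/2)) * P powr q * (cmod (v1 \<xi>))\<^sup>2 + (Kw * P powr (\<alpha> + \<sigma>/2)) * P powr q * (cmod (v0 \<xi>))\<^sup>2)"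
    using F W1 W2 by (intro mult_left_mono add_mono mult_right_mono) auto
  also have "\<dots> = 3/2 * Kw * F * ((P powr (\<delta> + \<sigma>/2) * P powr q) * (cmod (v1 \<xi>))\<^sup>2 + (P powr (\<alpha> + \<sigma>/2) * P powr q) * (cmod (v0 \<xi>))\<^sup>2)"
    by (simp add: algebra_simps)
  also have "P powr (\<delta> + \<sigma>/2) * P powr q = P powr r" unfolding r by (simp add: powr_add)
  also have "P powr (\<alpha> + \<sigma>/2) * P powr q = P powr s" unfolding s by (simp add: powr_add)
  finally show ?thesis unfolding Kw_def P_def \<rho>_def .
qed

theorem proposition3p1:
  fixes \<delta> \<alpha> \<theta> \<sigma> \<epsilon> :: real
  assumes "\<delta> \<ge> 0" and "\<alpha> \<ge> 0" and "0 \<le> \<theta>" and "\<theta> \<le> \<alpha>"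
    and "0 < \<epsilon>" and "\<epsilon> < 1"
  shows
   "(\<delta> \<le> \<theta> \<longrightarrow>
      (\<exists>c>0. \<exists>C>0. \<forall>(v0 :: real^'n \<Rightarrow> complex) v1 w w'.
         in_H (\<alpha> + \<sigma>/2) v0 \<and> in_H (\<delta> + \<sigma>/2) v1 \<and> is_fourier_sol \<delta> \<alpha> \<theta> v0 v1 w w' \<longrightarrow>
         (\<forall>t\<ge>0. high_freq_energy \<delta> \<alpha> \<sigma> \<epsilon> w w' t
            \<le> ennreal C * (sob_norm2 (\<delta> + \<sigma>/2) v1 + sob_norm2 (\<alpha> + \<sigma>/2) v0)
              * ennreal (exp (- c * t)))))
    \<and>
    (\<forall>\<beta>>0. \<theta> < \<delta> \<longrightarrow>
      (let s = \<alpha> + (\<delta> - \<theta>)/\<beta> + \<sigma>/2; r = \<delta> + (\<delta> - \<theta>)/\<beta> + \<sigma>/2 in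
      (\<exists>C>0. \<forall>(v0 :: real^'n \<Rightarrow> complex) v1 w w'.
         in_H s v0 \<and> in_H r v1 \<and> is_fourier_sol \<delta> \<alpha> \<theta> v0 v1 w w' \<longrightarrow>
         (\<forall>t\<ge>0. high_freq_energy \<delta> \<alpha> \<sigma> \<epsilon> w w' t
            \<le> ennreal C * (sob_norm2 r v1 + sob_norm2 s v0)
              * ennreal ((1 + t) powr (- 1/\<beta>))))))"
proof -
  note as = assms
  define Kw where "Kw = max (2 * max 1 ((\<epsilon>\<^sup>2/2) powr (\<sigma>/2))) (max 1 ((\<epsilon>\<^sup>2/2) powr (\<alpha> + \<sigma>/2)))"
  have Kw: "Kw > 0" unfolding Kw_def by (simp add: less_max_iff_disj)
  have part1: "\<delta> \<le> \<theta> \<longrightarrow>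
      (\<exists>c>0. \<exists>C>0. \<forall>(v0 :: real^'n \<Rightarrow> complex) v1 w w'.
         in_H (\<alpha> + \<sigma>/2) v0 \<and> in_H (\<delta> + \<sigma>/2) v1 \<and> is_fourier_sol \<delta> \<alpha> \<theta> v0 v1 w w' \<longrightarrow>
         (\<forall>t\<ge>0. high_freq_energy \<delta> \<alpha> \<sigma> \<epsilon> w w' t
            \<le> ennreal C * (sob_norm2 (\<delta> + \<sigma>/2) v1 + sob_norm2 (\<alpha> + \<sigma>/2) v0)
              * ennreal (exp (- c * t))))"
  proof
    assume dt: "\<delta> \<le> \<theta>"
    define c0 where "c0 = min (\<epsilon> powr (2*\<theta>) / 2) (\<epsilon> powr (2*\<alpha> - 2*\<theta>) / 3)"
    have c0: "c0 > 0" unfolding c0_def using as by simp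
    define c where "c = 2/3 * c0"
    define C where "C = 3/2 * Kw"
    have c: "c > 0" and C: "C > 0" unfolding c_def C_def using c0 Kw by auto
    have main: "high_freq_energy \<delta> \<alpha> \<sigma> \<epsilon> w w' t
            \<le> ennreal C * (sob_norm2 (\<delta> + \<sigma>/2) v1 + sob_norm2 (\<alpha> + \<sigma>/2) v0) * ennreal (exp (- c * t))"
      if H: "in_H (\<alpha> + \<sigma>/2) v0" "in_H (\<delta> + \<sigma>/2) v1" "is_fourier_sol \<delta> \<alpha> \<theta> v0 v1 w w'" and t: "t \<ge> 0"
      for v0 v1 :: "real^'n \<Rightarrow> complex" and w w' t
    proof -
      have "high_freq_energy \<delta> \<alpha> \<sigma> \<epsilon> w w' t \<le> ennreal (C * exp (- c * t)) * (sob_norm2 (\<delta> + \<sigma>/2) v1 + sob_norm2 (\<alpha> + \<sigma>/2) v0)"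
      proof (rule energy_int)
        show "0 \<le> C * exp (- c * t)" using C by simp
        show "v0 \<in> borel_measurable lborel" "v1 \<in> borel_measurable lborel" using H unfolding in_H_def by auto
        fix \<xi> :: "real^'n" assume xi: "\<epsilon> \<le> norm \<xi>"
        have rt: "c0 \<le> min (norm \<xi> powr (2*\<theta>) / (1 + norm \<xi> powr (2*\<delta>))) (norm \<xi> powr (2*\<alpha>) / (3 * norm \<xi> powr (2*\<theta>)))"
          unfolding c0_def using rate_i[of \<epsilon> "norm \<xi>" \<delta> \<theta> \<alpha>] as xi dt by simp
        have "1 + (norm \<xi>)\<^sup>2 > 0" by (intro add_pos_nonneg) auto
        then have P1: "(1 + (norm \<xi>)\<^sup>2) powr 0 = 1" by simp
        have ex: "exp (- (2/3 * min (norm \<xi> powr (2*\<theta>) / (1 + norm \<xi> powr (2*\<delta>)))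
                       (norm \<xi> powr (2*\<alpha>) / (3 * norm \<xi> powr (2*\<theta>)))) * t) \<le> exp (- c * t) * (1 + (norm \<xi>)\<^sup>2) powr 0"
          unfolding P1 c_def using rt t by (simp add: mult_right_mono)
        show "E1 \<delta> \<alpha> \<sigma> w w' t \<xi> \<le> C * exp (- c * t) *
          ((1 + (norm \<xi>)\<^sup>2) powr (\<delta> + \<sigma>/2) * (cmod (v1 \<xi>))\<^sup>2 + (1 + (norm \<xi>)\<^sup>2) powr (\<alpha> + \<sigma>/2) * (cmod (v0 \<xi>))\<^sup>2)"
          using pt_core[where r="\<delta> + \<sigma>/2" and s="\<alpha> + \<sigma>/2" and q=0 and \<sigma>=\<sigma>, OF H(3) as(5,6) xi t as(1) _ _ _ ex]
          unfolding C_def Kw_def by (simp add: mult.assoc)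
      qed
      also have "\<dots> = ennreal C * (sob_norm2 (\<delta> + \<sigma>/2) v1 + sob_norm2 (\<alpha> + \<sigma>/2) v0) * ennreal (exp (- c * t))"
        using C by (simp add: ennreal_mult mult_ac)
      finally show ?thesis .
    qed
    show "\<exists>c>0. \<exists>C>0. \<forall>(v0 :: real^'n \<Rightarrow> complex) v1 w w'.
         in_H (\<alpha> + \<sigma>/2) v0 \<and> in_H (\<delta> + \<sigma>/2) v1 \<and> is_fourier_sol \<delta> \<alpha> \<theta> v0 v1 w w' \<longrightarrow>
         (\<forall>t\<ge>0. high_freq_energy \<delta> \<alpha> \<sigma> \<epsilon> w w' t
            \<le> ennreal C * (sob_norm2 (\<delta> + \<sigma>/2) v1 + sob_norm2 (\<alpha> + \<sigma>/2) v0)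
              * ennreal (exp (- c * t)))"
      using main c C by blast
  qed
  have part2: "\<forall>\<beta>>0. \<theta> < \<delta> \<longrightarrow>
      (let s = \<alpha> + (\<delta> - \<theta>)/\<beta> + \<sigma>/2; r = \<delta> + (\<delta> - \<theta>)/\<beta> + \<sigma>/2 in
      (\<exists>C>0. \<forall>(v0 :: real^'n \<Rightarrow> complex) v1 w w'.
         in_H s v0 \<and> in_H r v1 \<and> is_fourier_sol \<delta> \<alpha> \<theta> v0 v1 w w' \<longrightarrow>
         (\<forall>t\<ge>0. high_freq_energy \<delta> \<alpha> \<sigma> \<epsilon> w w' t
            \<le> ennreal C * (sob_norm2 r v1 + sob_norm2 s v0)
              * ennreal ((1 + t) powr (- 1/\<beta>)))))"
  proof (intro allI impI)
    fix \<beta> :: real assume \<beta>: "\<beta> > 0" and td: "\<theta> < \<delta>"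
    define s where "s = \<alpha> + (\<delta> - \<theta>)/\<beta> + \<sigma>/2"
    define r where "r = \<delta> + (\<delta> - \<theta>)/\<beta> + \<sigma>/2"
    define p where "p = 1 / \<beta>"
    have p: "p > 0" unfolding p_def using \<beta> by simp
    define c2 where "c2 = min ((\<epsilon>\<^sup>2/2) powr \<theta> / 2) (\<epsilon> powr (2*\<alpha> - 2*\<theta>) / 3)"
    have c2: "c2 > 0" unfolding c2_def using as by simp
    define c where "c = 2/3 * c2"
    have c: "c > 0" unfolding c_def using c2 by simp
    define Mb where "Mb = max 1 p powr p"
    define Q where "Q = (min c 1) powr (- p)"
    have Mb: "Mb > 0" unfolding Mb_def by simp
    have Q: "Q > 0" unfolding Q_def using c by simp
    define C where "C = 3/2 * Kw * (Mb * Q)"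
    have C: "C > 0" unfolding C_def using Kw Mb Q by simp
    have main: "high_freq_energy \<delta> \<alpha> \<sigma> \<epsilon> w w' t
            \<le> ennreal C * (sob_norm2 r v1 + sob_norm2 s v0) * ennreal ((1 + t) powr (- 1/\<beta>))"
      if H: "in_H s v0" "in_H r v1" "is_fourier_sol \<delta> \<alpha> \<theta> v0 v1 w w'" and t: "t \<ge> 0"
      for v0 v1 :: "real^'n \<Rightarrow> complex" and w w' t
    proof -
      define T where "T = (1 + t) powr (- p)"
      have T: "T \<ge> 0" unfolding T_def by simp
      have "high_freq_energy \<delta> \<alpha> \<sigma> \<epsilon> w w' t \<le> ennreal (C * T) * (sob_norm2 r v1 + sob_norm2 s v0)"
      proof (rule energy_int)
        show "0 \<le> C * T" using C T by simp
        show "v0 \<in> borel_measurable lborel" "v1 \<in> borel_measurable lborel" using H unfolding in_H_def by auto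
        fix \<xi> :: "real^'n" assume xi: "\<epsilon> \<le> norm \<xi>"
        define P where "P = 1 + (norm \<xi>)\<^sup>2"
        have P0: "P > 0" unfolding P_def by (intro add_pos_nonneg) auto
        have P1: "P \<ge> 1" unfolding P_def by simp
        define m where "m = P powr (\<theta> - \<delta>)"
        have m0: "m > 0" unfolding m_def using P0 by simp
        have m1: "m \<le> 1"
        proof -
          have "P powr (\<theta> - \<delta>) \<le> P powr 0" using P1 td by (intro powr_mono) auto
          then show ?thesis using P0 unfolding m_def by simp
        qed
        have rt: "c2 * m \<le> min (norm \<xi> powr (2*\<theta>) / (1 + norm \<xi> powr (2*\<delta>))) (norm \<xi> powr (2*\<alpha>) / (3 * norm \<xi> powr (2*\<theta>)))"
          unfolding c2_def m_def P_def using rate_ii[of \<epsilon> "norm \<xi>" \<theta> \<delta> \<alpha>] as xi td by simp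
        define y where "y = c * m * t"
        have y: "y \<ge> 0" unfolding y_def using c m0 t by simp
        have "exp (- (2/3 * min (norm \<xi> powr (2*\<theta>) / (1 + norm \<xi> powr (2*\<delta>)))
                       (norm \<xi> powr (2*\<alpha>) / (3 * norm \<xi> powr (2*\<theta>)))) * t) \<le> exp (- y)"
          unfolding y_def c_def using mult_right_mono[OF rt t] by (simp add: mult.assoc)
        also have "\<dots> \<le> Mb * (1 + y) powr (- p)" unfolding Mb_def by (rule exp_poly[OF y p])
        also have "(1 + y) powr (- p) \<le> (min c 1 * m * (1 + t)) powr (- p)"
        proof (rule powr_mono2')
          show "- p \<le> 0" using p by simp
          show "0 < min c 1 * m * (1 + t)" using c m0 t by simp
          have "min c 1 * m \<le> 1 * 1" using c m0 m1 by (intro mult_mono) auto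
          moreover have "min c 1 * m * t \<le> c * m * t" using c m0 t by (intro mult_right_mono) auto
          ultimately show "min c 1 * m * (1 + t) \<le> 1 + y" unfolding y_def by (simp add: algebra_simps)
        qed
        also have "(min c 1 * m * (1 + t)) powr (- p) = Q * m powr (- p) * T"
          unfolding Q_def T_def using c m0 t by (simp add: powr_mult)
        also have "m powr (- p) = P powr ((\<delta> - \<theta>)/\<beta>)"
        proof -
          have "- ((\<theta> - \<delta>) / \<beta>) = (\<delta> - \<theta>) / \<beta>" by (metis minus_diff_eq minus_divide_left)
          then show ?thesis unfolding m_def p_def using P0 by (simp add: powr_powr)
        qed
        finally have ex: "exp (- (2/3 * min (norm \<xi> powr (2*\<theta>) / (1 + norm \<xi> powr (2*\<delta>)))
                       (norm \<xi> powr (2*\<alpha>) / (3 * norm \<xi> powr (2*\<theta>)))) * t) \<le> (Mb * Q * T) * (1 + (norm \<xi>)\<^sup>2) powr ((\<delta> - \<theta>)/\<beta>)"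
          using Mb unfolding P_def by (simp add: mult_left_mono algebra_simps)
        show "E1 \<delta> \<alpha> \<sigma> w w' t \<xi> \<le> C * T *
          ((1 + (norm \<xi>)\<^sup>2) powr r * (cmod (v1 \<xi>))\<^sup>2 + (1 + (norm \<xi>)\<^sup>2) powr s * (cmod (v0 \<xi>))\<^sup>2)"
          using pt_core[where r=r and s=s and q="(\<delta> - \<theta>)/\<beta>" and \<sigma>=\<sigma>, OF H(3) as(5,6) xi t as(1) _ _ _ ex] Mb Q T
          unfolding C_def Kw_def r_def s_def by (simp add: mult_ac)
      qed
      also have "\<dots> = ennreal C * (sob_norm2 r v1 + sob_norm2 s v0) * ennreal ((1 + t) powr (- 1/\<beta>))"
        using C T unfolding T_def p_def by (simp add: ennreal_mult mult_ac)
      finally show ?thesis .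
    qed
    show "let s = \<alpha> + (\<delta> - \<theta>)/\<beta> + \<sigma>/2; r = \<delta> + (\<delta> - \<theta>)/\<beta> + \<sigma>/2 in
      (\<exists>C>0. \<forall>(v0 :: real^'n \<Rightarrow> complex) v1 w w'.
         in_H s v0 \<and> in_H r v1 \<and> is_fourier_sol \<delta> \<alpha> \<theta> v0 v1 w w' \<longrightarrow>
         (\<forall>t\<ge>0. high_freq_energy \<delta> \<alpha> \<sigma> \<epsilon> w w' t
            \<le> ennreal C * (sob_norm2 r v1 + sob_norm2 s v0)
              * ennreal ((1 + t) powr (- 1/\<beta>))))"
      unfolding Let_def s_def[symmetric] r_def[symmetric] using main C by blast
  qed
  show ?thesis using part1 part2 by blast
qed

end
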